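(* Let $K$ be a field, $A\subset K$ a finite set with $|A|=m$, $0\le p\le m$, and $X=\{x_1,\dots,x_{m-p}\}$ a set of indeterminates. Let $B\subset K$ be any finite set with $|B|\ge p$. Then in $K[X]$, $$\sum_{A'\subset A,\ |A'|=p}\mathcal{R}(A\setminus A',B)\frac{\mathcal{R}(X,A')}{\mathcal{R}(A\setminus A',A')}=\sum_{B'\subset B,\ |B'|=p}\mathcal{R}(A,B\setminus B')\frac{\mathcal{R}(X,B')}{\mathcal{R}(B',B\setminus B')}.$$
   Context: For finite sets $Y,Z$ of elements or indeterminates, $\mathcal{R}(Y,Z):=\prod_{y\in Y,z\in Z}(y-z)$, with $\mathcal{R}(Y,Z)=1$ if $Y$ or $Z$ is empty. *)

theory Defs
  imports Main "HOL-Library.Poly_Mapping"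
begin

text \<open>Multivariate polynomials over 'a in indeterminates x_0, x_1, ... :
  finitely supported maps from monomials (exponent vectors nat =>0 nat) to coefficients.\<close>
type_synonym 'a mpoly = "(nat \<Rightarrow>\<^sub>0 nat) \<Rightarrow>\<^sub>0 'a"

definition mvar :: "nat \<Rightarrow> 'a::{zero,one} mpoly" where
  "mvar i = Poly_Mapping.single (Poly_Mapping.single i 1) 1"

definition mconst :: "'a::zero \<Rightarrow> 'a mpoly" where
  "mconst c = Poly_Mapping.single 0 c"

definition Res :: "'b set \<Rightarrow> 'b set \<Rightarrow> 'b::comm_ring_1" where
  "Res Y Z = (\<Prod>y\<in>Y. \<Prod>z\<in>Z. (y - z))"

end

theory Submission imports Defs "HOL-Computational_Algebra.Polynomial" begin

definition RH :: "('a::field \<Rightarrow> 'r::comm_ring_1) \<Rightarrow> 'r set \<Rightarrow> 'a set \<Rightarrow> 'r" where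
  "RH h X C = (\<Prod>x\<in>X. \<Prod>c\<in>C. (x - h c))"
definition RHY :: "('a::field \<Rightarrow> 'r::comm_ring_1) \<Rightarrow> 'r set \<Rightarrow> (nat \<Rightarrow> 'a) \<Rightarrow> nat \<Rightarrow> 'r" where
  "RHY h X Y j = (\<Prod>x\<in>X. \<Prod>i<j. (x - h (Y i)))"
definition RY :: "'a::field set \<Rightarrow> (nat \<Rightarrow> 'a) \<Rightarrow> nat \<Rightarrow> 'a" where
  "RY S Y j = (\<Prod>s\<in>S. \<Prod>i<j. (s - Y i))"
definition FF :: "('a::field \<Rightarrow> 'r::comm_ring_1) \<Rightarrow> 'a set \<Rightarrow> 'r set \<Rightarrow> (nat \<Rightarrow> 'a) \<Rightarrow> nat \<Rightarrow> 'r" where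
  "FF h T X Y j = (\<Sum>S\<in>{S. S \<subseteq> T \<and> card S = card X}. h (RY S Y j / Res S (T - S)) * RH h X (T - S))"
definition PF :: "('a::field \<Rightarrow> 'r::comm_ring_1) \<Rightarrow> 'a set \<Rightarrow> 'r set \<Rightarrow> (nat \<Rightarrow> 'a) \<Rightarrow> nat \<Rightarrow> 'r poly" where
  "PF h T X Y j = (\<Sum>S\<in>{S. S \<subseteq> T \<and> card S = card X}.
      smult (h (RY S Y j / Res S (T - S)) * RH h X (T - S)) (\<Prod>s\<in>S. [:h s, -1:]))"
definition PR :: "('a::field \<Rightarrow> 'r::comm_ring_1) \<Rightarrow> 'r set \<Rightarrow> (nat \<Rightarrow> 'a) \<Rightarrow> nat \<Rightarrow> 'r poly" where
  "PR h X Y j = smult (RHY h X Y j) (\<Prod>x\<in>X. [:x, -1:])"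

lemma poly_pts_zero:
  fixes p :: "'r::comm_ring_1 poly"
  assumes "finite P" "degree p < card P" "\<forall>a\<in>P. poly p a = 0"
    "\<forall>a\<in>P. \<forall>b\<in>P. a \<noteq> b \<longrightarrow> (\<exists>u. (a - b) * u = 1)"
  shows "p = 0"
  using assms
proof (induction P arbitrary: p rule: finite_induct)
  case empty thus ?case by simp
next
  case (insert a P)
  define q where "q = synthetic_div p a"
  have pa: "poly p a = 0" using insert.prems by simp
  have p_eq: "p = [:-a, 1:] * q" using synthetic_div_correct'[of a p] pa unfolding q_def by simp
  show ?case
  proof (cases "P = {}")
    case True
    then have "degree p = 0" using insert.prems by simp
    then obtain c where "p = [:c:]" by (metis degree_eq_zeroE)
    with pa show ?thesis by simp
  next
    case False
    have dq: "degree q = degree p - 1" unfolding q_def by (rule degree_synthetic_div)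
    have "card P > 0" using False insert.hyps by (simp add: card_gt_0_iff)
    have "degree q < card P" using dq insert.prems insert.hyps \<open>card P > 0\<close> by auto
    moreover have "\<forall>b\<in>P. poly q b = 0"
    proof
      fix b assume b: "b \<in> P"
      then have "b \<noteq> a" using insert.hyps by auto
      then obtain u where u: "(b - a) * u = 1" using insert.prems b by auto
      have "poly p b = poly ([:-a, 1:] * q) b" by (rule arg_cong[OF p_eq])
      also have "\<dots> = (b - a) * poly q b" by (simp add: algebra_simps)
      finally have "poly p b = (b - a) * poly q b" .
      then have z: "(b-a) * poly q b = 0" using insert.prems b by simp
      have "poly q b = ((b - a) * u) * poly q b" using u by simp
      also have "\<dots> = u * ((b-a) * poly q b)" by (simp add: ac_simps)
      finally show "poly q b = 0" using z by simp
    qed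
    moreover have "\<forall>x\<in>P. \<forall>y\<in>P. x \<noteq> y \<longrightarrow> (\<exists>u. (x - y) * u = 1)" using insert.prems(3) by blast
    ultimately have "q = 0" using insert.IH[of q] by blast
    thus ?thesis using p_eq by simp
  qed
qed

lemma prod_lin:
  fixes f :: "'b \<Rightarrow> 'r::comm_ring_1"
  assumes "finite S"
  shows "degree (\<Prod>s\<in>S. [:f s, -1:]) \<le> card S \<and> coeff (\<Prod>s\<in>S. [:f s, -1:]) (card S) = (-1)^card S"
  using assms
proof (induction S rule: finite_induct)
  case empty then show ?case by simp
next
  case (insert s S)
  let ?Q = "\<Prod>s\<in>S. [:f s, -1:]"
  have eq: "(\<Prod>s\<in>insert s S. [:f s, -1:]) = [:f s, -1:] * ?Q" using insert by simp
  have d: "degree ([:f s, -1:] * ?Q) \<le> Suc (card S)"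
  proof -
    have "degree ([:f s, -1:] * ?Q) \<le> degree [:f s, -1:] + degree ?Q" by (rule degree_mult_le)
    moreover have "degree [:f s, -1:] \<le> 1" by simp
    ultimately show ?thesis using insert.IH by simp
  qed
  have c0: "coeff ?Q (Suc (card S)) = 0" using insert.IH by (simp add: coeff_eq_0)
  have "coeff ([:f s, -1:] * ?Q) (Suc (card S)) = - coeff ?Q (card S)"
    using c0 by simp
  then show ?case using eq d insert by simp
qed

lemma RY_split: "RY S (Y(j0 := c)) (Suc j0) = RY S Y j0 * (\<Prod>s\<in>S. (s - c))"
proof -
  have "(\<Prod>i<j0. (s - (Y(j0 := c)) i)) = (\<Prod>i<j0. (s - Y i))" for s
    by (rule prod.cong) auto
  then show ?thesis unfolding RY_def by (simp add: lessThan_Suc prod.distrib ac_simps)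
qed

lemma RHY_split: "RHY h X (Y(j0 := c)) (Suc j0) = RHY h X Y j0 * (\<Prod>x\<in>X. (x - h c))"
proof -
  have "(\<Prod>i<j0. (x - h ((Y(j0 := c)) i))) = (\<Prod>i<j0. (x - h (Y i)))" for x
    by (rule prod.cong) auto
  then show ?thesis unfolding RHY_def by (simp add: lessThan_Suc prod.distrib ac_simps)
qed

lemma Res_union2: "finite Z1 \<Longrightarrow> finite Z2 \<Longrightarrow> Z1 \<inter> Z2 = {} \<Longrightarrow> Res Y (Z1 \<union> Z2) = Res Y Z1 * Res Y Z2"
  unfolding Res_def by (simp add: prod.union_disjoint prod.distrib)

lemma Res_union1: "finite Z1 \<Longrightarrow> finite Z2 \<Longrightarrow> Z1 \<inter> Z2 = {} \<Longrightarrow> Res (Z1 \<union> Z2) Y = Res Z1 Y * Res Z2 Y"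
  unfolding Res_def by (simp add: prod.union_disjoint)

locale fhom =
  fixes h :: "'a::field \<Rightarrow> 'r::comm_ring_1"
  assumes h_add: "h (a + b) = h a + h b" and h_mult: "h (a * b) = h a * h b" and h_one: "h 1 = 1"
begin

lemma h_zero: "h 0 = 0" using h_add[of 0 0] by simp

lemma h_minus: "h (- a) = - h a"
proof -
  have "h a + h (- a) = 0" using h_add[of a "-a"] h_zero by simp
  then show ?thesis by (rule minus_unique[symmetric])
qed

lemma h_diff: "h (a - b) = h a - h b" using h_add[of a "-b"] h_minus by simp

lemma h_sum: "h (sum f A) = (\<Sum>x\<in>A. h (f x))"
  by (induction A rule: infinite_finite_induct) (auto simp: h_zero h_add)

lemma h_prod: "h (prod f A) = (\<Prod>x\<in>A. h (f x))"
  by (induction A rule: infinite_finite_induct) (auto simp: h_one h_mult)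

lemma h_unit: "a \<noteq> b \<Longrightarrow> (h a - h b) * h (1/(a-b)) = 1"
  by (simp flip: h_diff h_mult add: h_one)

lemma h_inj: "inj h"
proof (rule injI)
  fix a b assume e: "h a = h b"
  show "a = b"
  proof (rule ccontr)
    assume "a \<noteq> b"
    from h_unit[OF this] e show False by simp
  qed
qed

lemma FF_trick:
  assumes T: "finite T" "t \<in> T" and X: "finite X"
  shows "FF h T X (Y(j0 := t)) (Suc j0) = (\<Prod>x\<in>X. (x - h t)) * FF h (T - {t}) X Y j0"
proof -
  let ?Y = "Y(j0 := t)"
  let ?g = "\<lambda>S. h (RY S ?Y (Suc j0) / Res S (T - S)) * RH h X (T - S)"
  let ?gz = "\<lambda>S. h (RY S Y j0 / Res S ((T - {t}) - S)) * RH h X ((T - {t}) - S)"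
  define SS where "SS = {S. S \<subseteq> T \<and> card S = card X}"
  define SS0 where "SS0 = {S. S \<subseteq> T - {t} \<and> card S = card X}"
  have fin: "finite SS" by (rule finite_subset[of _ "Pow T"]) (auto simp: SS_def T)
  have sub: "SS0 \<subseteq> SS" unfolding SS_def SS0_def by auto
  have zero: "?g S = 0" if "S \<in> SS - SS0" for S
  proof -
    have "t \<in> S" "finite S" using that T unfolding SS_def SS0_def by (auto intro: finite_subset)
    then have "(\<Prod>s\<in>S. (s - t)) = 0" by (auto simp: prod_zero_iff)
    then show ?thesis by (simp add: RY_split h_zero)
  qed
  have nz: "?g S = (\<Prod>x\<in>X. (x - h t)) * ?gz S" if "S \<in> SS0" for S
  proof -
    have S: "S \<subseteq> T - {t}" "finite S" "t \<notin> S" using that T unfolding SS0_def by (auto intro: finite_subset)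
    have TS: "T - S = insert t ((T - {t}) - S)" using S T by auto
    have Pt: "(\<Prod>s\<in>S. (s - t)) \<noteq> 0" using S by (auto simp: prod_zero_iff)
    have fin2: "finite ((T - {t}) - S)" using T by simp
    have Res_eq: "Res S (T - S) = Res S ((T-{t}) - S) * (\<Prod>s\<in>S. (s - t))"
      unfolding Res_def TS using fin2 by (simp add: prod.distrib ac_simps)
    have RH_eq: "RH h X (T - S) = (\<Prod>x\<in>X. (x - h t)) * RH h X ((T - {t}) - S)"
      unfolding RH_def TS using fin2 by (simp add: prod.distrib)
    have "RY S ?Y (Suc j0) / Res S (T - S) = RY S Y j0 / Res S ((T-{t}) - S)"
      using Pt by (simp add: RY_split Res_eq)
    then show ?thesis using RH_eq by (simp add: ac_simps)
  qed
  have "FF h T X ?Y (Suc j0) = sum ?g SS" unfolding FF_def SS_def ..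
  also have "\<dots> = sum ?g SS0"
    by (rule sum.mono_neutral_right[OF fin sub]) (use zero in auto)
  also have "\<dots> = sum (\<lambda>S. (\<Prod>x\<in>X. (x - h t)) * ?gz S) SS0"
    by (rule sum.cong) (auto simp: nz)
  also have "\<dots> = (\<Prod>x\<in>X. (x - h t)) * sum ?gz SS0" by (simp add: sum_distrib_left)
  also have "sum ?gz SS0 = FF h (T - {t}) X Y j0" unfolding FF_def SS0_def ..
  finally show ?thesis .
qed

lemma PF_eval:
  assumes "finite T"
  shows "poly (PF h T X Y j0) (h c) = FF h T X (Y(j0 := c)) (Suc j0)"
  unfolding PF_def FF_def poly_sum
proof (rule sum.cong[OF refl])
  fix S assume "S \<in> {S. S \<subseteq> T \<and> card S = card X}"
  let ?D = "Res S (T - S)"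
  have "h (RY S (Y(j0 := c)) (Suc j0) / ?D) = h (RY S Y j0 / ?D * (\<Prod>s\<in>S. (s - c)))"
    by (simp add: RY_split times_divide_eq_left)
  also have "\<dots> = h (RY S Y j0 / ?D) * (\<Prod>s\<in>S. (h s - h c))"
    by (simp only: h_mult h_prod h_diff)
  finally show "poly (smult (h (RY S Y j0 / ?D) * RH h X (T - S)) (\<Prod>s\<in>S. [:h s, - 1:])) (h c) =
      h (RY S (Y(j0 := c)) (Suc j0) / ?D) * RH h X (T - S)"
    by (simp add: poly_prod ac_simps)
qed

lemma PR_eval: "poly (PR h X Y j0) (h c) = RHY h X (Y(j0 := c)) (Suc j0)"
  unfolding PR_def by (simp add: poly_prod RHY_split)

lemma PF_deg: "finite T \<Longrightarrow> degree (PF h T X Y j0) \<le> card X"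
  unfolding PF_def
proof (rule degree_sum_le)
  assume T: "finite T"
  show "finite {S. S \<subseteq> T \<and> card S = card X}" by (rule finite_subset[of _ "Pow T"]) (auto simp: T)
  fix S assume "S \<in> {S. S \<subseteq> T \<and> card S = card X}"
  then have S: "finite S" "card S = card X" using T by (auto intro: finite_subset)
  show "degree (smult (h (RY S Y j0 / Res S (T - S)) * RH h X (T - S)) (\<Prod>s\<in>S. [:h s, - 1:])) \<le> card X"
    using order_trans[OF degree_smult_le] prod_lin[OF S(1), of h] S(2) by fastforce
qed

lemma PR_deg: "finite X \<Longrightarrow> degree (PR h X Y j0) \<le> card X"
  unfolding PR_def using order_trans[OF degree_smult_le] prod_lin[of X "\<lambda>x. x"] by fastforce

lemma PF_coeff: "finite T \<Longrightarrow> coeff (PF h T X Y j0) (card X) = FF h T X Y j0 * (-1)^card X"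
  unfolding PF_def FF_def coeff_sum sum_distrib_right
proof (rule sum.cong[OF refl])
  fix S assume "finite T" "S \<in> {S. S \<subseteq> T \<and> card S = card X}"
  then have S: "finite S" "card S = card X" by (auto intro: finite_subset)
  show "coeff (smult (h (RY S Y j0 / Res S (T - S)) * RH h X (T - S)) (\<Prod>s\<in>S. [:h s, - 1:])) (card X)
     = h (RY S Y j0 / Res S (T - S)) * RH h X (T - S) * (- 1) ^ card X"
    using prod_lin[OF S(1), of h] S(2) by simp
qed

lemma PR_coeff: "finite X \<Longrightarrow> coeff (PR h X Y j0) (card X) = RHY h X Y j0 * (-1)^card X"
  unfolding PR_def using prod_lin[of X "\<lambda>x. x"] by simp

lemma G:
  assumes "finite T" "finite X" "j + card X \<le> card T"
  shows "FF h T X Y j = RHY h X Y j"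
  using assms
proof (induction "card T" arbitrary: T Y j rule: less_induct)
  case less
  have polyeq: "PF h T X Y' j0 = PR h X Y' j0" if j0: "Suc j0 + card X \<le> card T" for j0 Y'
  proof -
    have "PF h T X Y' j0 - PR h X Y' j0 = 0"
    proof (rule poly_pts_zero[where P = "h ` T"])
      show "finite (h ` T)" using less by simp
      have "card (h ` T) = card T" using card_image[OF inj_on_subset[OF h_inj subset_UNIV]] .
      moreover have "degree (PF h T X Y' j0 - PR h X Y' j0) \<le> card X"
        by (rule degree_diff_le[OF PF_deg PR_deg]) (use less.prems in auto)
      ultimately show "degree (PF h T X Y' j0 - PR h X Y' j0) < card (h ` T)"
        using j0 by linarith
      show "\<forall>a\<in>h ` T. poly (PF h T X Y' j0 - PR h X Y' j0) a = 0"
      proof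
        fix a assume "a \<in> h ` T"
        then obtain t where t: "t \<in> T" "a = h t" by auto
        have "poly (PF h T X Y' j0) (h t) = FF h T X (Y'(j0:=t)) (Suc j0)"
          by (rule PF_eval) (use less in auto)
        also have "\<dots> = (\<Prod>x\<in>X. (x - h t)) * FF h (T - {t}) X Y' j0"
          by (rule FF_trick) (use less t in auto)
        also have "FF h (T - {t}) X Y' j0 = RHY h X Y' j0"
          apply (rule less.hyps) using less.prems t j0 by (auto simp: card_Diff_singleton card_gt_0_iff)
        also have "(\<Prod>x\<in>X. (x - h t)) * RHY h X Y' j0 = poly (PR h X Y' j0) (h t)"
          by (simp add: PR_eval RHY_split)
        finally show "poly (PF h T X Y' j0 - PR h X Y' j0) a = 0" using t by simp
      qed
      show "\<forall>a\<in>h ` T. \<forall>b\<in>h ` T. a \<noteq> b \<longrightarrow> (\<exists>u. (a - b) * u = 1)"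
      proof (intro ballI impI)
        fix a b assume ab: "a \<in> h ` T" "b \<in> h ` T" "a \<noteq> b"
        then obtain x y where xy: "a = h x" "b = h y" "x \<noteq> y" by auto
        show "\<exists>u. (a - b) * u = 1" using h_unit[OF xy(3)] xy(1,2) by blast
      qed
    qed
    thus ?thesis by simp
  qed
  show ?case
  proof (cases j)
    case (Suc j0)
    have "FF h T X Y j = FF h T X (Y(j0 := Y j0)) (Suc j0)" using Suc by simp
    also have "\<dots> = poly (PF h T X Y j0) (h (Y j0))" using PF_eval less by simp
    also have "\<dots> = poly (PR h X Y j0) (h (Y j0))" using polyeq[of j0 Y] Suc less.prems by simp
    also have "\<dots> = RHY h X (Y(j0 := Y j0)) (Suc j0)" by (rule PR_eval)
    finally show ?thesis using Suc by simp
  next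
    case 0
    show ?thesis
    proof (cases "card X = card T")
      case True
      have SS: "{S. S \<subseteq> T \<and> card S = card X} = {T}"
      proof (intro set_eqI iffI)
        fix S assume "S \<in> {S. S \<subseteq> T \<and> card S = card X}"
        then have "S \<subseteq> T" "card S = card T" using True by auto
        then have "S = T" using card_subset_eq less.prems(1) by blast
        then show "S \<in> {T}" by simp
      qed (use True in auto)
      show ?thesis using 0 by (simp add: FF_def SS RY_def RHY_def RH_def Res_def h_one)
    next
      case False
      then have lt: "Suc 0 + card X \<le> card T" using less.prems 0 by simp
      have "coeff (PF h T X Y 0) (card X) = coeff (PR h X Y 0) (card X)" using polyeq[OF lt] by simp
      then have e: "FF h T X Y 0 * (-1)^card X = RHY h X Y 0 * (-1)^card X"
        using PF_coeff PR_coeff less.prems by simp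
      have u: "(-1::'r)^card X * (-1)^card X = 1" by (simp flip: power_mult_distrib)
      have "FF h T X Y 0 * (-1)^card X * (-1)^card X = RHY h X Y 0 * (-1)^card X * (-1)^card X"
        using e by (rule arg_cong[where f="\<lambda>z. z * (-1)^card X"])
      then have "FF h T X Y 0 = RHY h X Y 0" by (simp only: mult.assoc u mult_1_right)
      then show ?thesis using 0 by simp
    qed
  qed
qed

end


lemma mconst_hom: "fhom (mconst :: 'a::field \<Rightarrow> 'a mpoly)"
  by unfold_locales (simp_all add: mconst_def single_add mult_single)

lemma id_hom: "fhom (\<lambda>x::'a::field. x)"
  by unfold_locales auto

lemma inj_mvar: "inj (mvar :: nat \<Rightarrow> 'a::field mpoly)"
proof (rule injI)
  fix i j :: nat assume e: "(mvar i :: 'a mpoly) = mvar j"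
  show "i = j"
  proof (rule ccontr)
    assume ne: "i \<noteq> j"
    have ne2: "Poly_Mapping.single i (1::nat) \<noteq> Poly_Mapping.single j 1"
    proof
      assume "Poly_Mapping.single i (1::nat) = Poly_Mapping.single j 1"
      then have "Poly_Mapping.lookup (Poly_Mapping.single i (1::nat)) i = Poly_Mapping.lookup (Poly_Mapping.single j 1) i" by simp
      then show False using ne by (simp add: lookup_single_not_eq)
    qed
    have l1: "Poly_Mapping.lookup (mvar i :: 'a mpoly) (Poly_Mapping.single i 1) = 1"
      unfolding mvar_def by (rule lookup_single_eq)
    have l2: "Poly_Mapping.lookup (mvar j :: 'a mpoly) (Poly_Mapping.single i 1) = 0"
      unfolding mvar_def by (rule lookup_single_not_eq) (use ne2 in auto)
    show False using l1 l2 e by simp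
  qed
qed

lemma inj_mconst: "inj (mconst :: 'a::field \<Rightarrow> 'a mpoly)"
proof -
  have e: "(mconst :: 'a \<Rightarrow> 'a mpoly) = Poly_Mapping.single 0" by (rule ext) (simp add: mconst_def)
  show ?thesis unfolding e by (rule inj_single)
qed

lemma ResX: "Res X (mconst ` C) = RH mconst X (C :: 'a::field set)"
  unfolding Res_def RH_def
  by (rule prod.cong[OF refl]) (simp add: prod.reindex inj_on_subset[OF inj_mconst subset_UNIV])


lemma RY0: "RY S Y 0 = 1" by (simp add: RY_def)
lemma RHY0: "RHY h X Y 0 = 1" by (simp add: RHY_def)
lemma RH_id: "RH (\<lambda>x. x) X C = Res X C" by (simp add: RH_def Res_def)

theorem lemma3p1:
  fixes A B :: "'a::field set" and m p :: nat
  assumes "finite A" and "card A = m" and "p \<le> m"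
    and "finite B" and "card B \<ge> p"
  shows "(\<Sum>A'\<in>{A'. A' \<subseteq> A \<and> card A' = p}.
            mconst (Res (A - A') B / Res (A - A') A')
            * Res (mvar ` {..<m - p}) (mconst ` A'))
       = (\<Sum>B'\<in>{B'. B' \<subseteq> B \<and> card B' = p}.
            mconst (Res A (B - B') / Res B' (B - B'))
            * Res (mvar ` {..<m - p}) (mconst ` B'))"
proof -
  interpret fid: fhom "\<lambda>x::'a. x" by (rule id_hom)
  interpret fm: fhom "mconst :: 'a \<Rightarrow> 'a mpoly" by (rule mconst_hom)
  define k where "k = m - p"
  define X where "X = (mvar ` {..<k} :: 'a mpoly set)"
  define AA where "AA = {A'. A' \<subseteq> A \<and> card A' = p}"
  define BB where "BB = {B'. B' \<subseteq> B \<and> card B' = p}"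
  have finX: "finite X" unfolding X_def by simp
  have cardX: "card X = k" unfolding X_def
    using card_image[OF inj_on_subset[OF inj_mvar subset_UNIV], of "{..<k}"] by simp
  have L1: "(\<Sum>B'\<in>BB. Res A' (B - B') / Res B' (B - B')) = 1" if "A' \<in> AA" for A'
  proof -
    have A': "finite A'" "card A' = p" using that assms(1) by (auto simp: AA_def intro: finite_subset)
    have "FF (\<lambda>x. x) B A' (\<lambda>_. 0) 0 = RHY (\<lambda>x. x) A' (\<lambda>_. 0) 0"
      by (rule fid.G) (use A' assms in auto)
    then show ?thesis by (simp add: FF_def RY0 RHY0 RH_id A'(2) BB_def)
  qed
  have L2: "(\<Sum>A'\<in>AA. mconst (Res (A - A') B' / Res (A - A') A') * RH mconst X A') = RH mconst X B'"
    if "B' \<in> BB" for B'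
  proof -
    have B': "B' \<subseteq> B" "card B' = p" "finite B'" using that assms(4) by (auto simp: BB_def intro: finite_subset)
    obtain Y where Y: "bij_betw Y {..<p} B'"
      using ex_bij_betw_nat_finite[OF B'(3)] B'(2) by (auto simp: atLeast0LessThan)
    have G: "FF mconst A X Y p = RHY mconst X Y p"
      by (rule fm.G) (use assms finX cardX in \<open>auto simp: k_def\<close>)
    have RYeq: "RY S Y p = Res S B'" for S
      unfolding RY_def Res_def by (rule prod.cong[OF refl]) (rule prod.reindex_bij_betw[OF Y])
    have RHYeq: "RHY mconst X Y p = RH mconst X B'"
      unfolding RHY_def RH_def by (rule prod.cong[OF refl]) (rule prod.reindex_bij_betw[OF Y])
    have reidx: "FF mconst A X Y p = (\<Sum>A'\<in>AA. mconst (Res (A - A') B' / Res (A - A') A') * RH mconst X A')"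
      unfolding FF_def
    proof (rule sum.reindex_bij_witness[where i="\<lambda>S. A - S" and j="\<lambda>S. A - S"])
      fix S assume "S \<in> {S. S \<subseteq> A \<and> card S = card X}"
      then have S: "S \<subseteq> A" "card S = k" using cardX by auto
      have fS: "finite S" using S(1) assms(1) by (rule finite_subset)
      show "A - (A - S) = S" using S by auto
      show "A - S \<in> AA" using S fS assms by (auto simp: AA_def card_Diff_subset k_def)
      show "mconst (Res (A - (A - S)) B' / Res (A - (A - S)) (A - S)) * RH mconst X (A - S) =
          mconst (RY S Y p / Res S (A - S)) * RH mconst X (A - S)"
        using S by (simp add: RYeq Diff_Diff_Int Int_absorb1)
    next
      fix A' assume "A' \<in> AA"
      then have A': "A' \<subseteq> A" "card A' = p" by (auto simp: AA_def)
      have fA: "finite A'" using A'(1) assms(1) by (rule finite_subset)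
      show "A - (A - A') = A'" using A' by auto
      show "A - A' \<in> {S. S \<subseteq> A \<and> card S = card X}"
        using A' fA assms cardX by (auto simp: card_Diff_subset k_def)
    qed
    show ?thesis using G RHYeq reidx by simp
  qed
  have split: "Res (A - A') B / Res (A - A') A' =
     (\<Sum>B'\<in>BB. (Res A (B - B') / Res B' (B - B')) * (Res (A - A') B' / Res (A - A') A'))"
    if "A' \<in> AA" for A'
  proof -
    have A': "A' \<subseteq> A" "finite A'" using that assms(1) by (auto simp: AA_def intro: finite_subset)
    have key: "(Res (A - A') B / Res (A - A') A') * (Res A' (B - B') / Res B' (B - B')) =
        (Res A (B - B') / Res B' (B - B')) * (Res (A - A') B' / Res (A - A') A')" if "B' \<in> BB" for B'
    proof -
      have B': "B' \<subseteq> B" "finite B'" using that assms(4) by (auto simp: BB_def intro: finite_subset)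
      have uB: "B = B' \<union> (B - B')" using B' by auto
      have uA: "A = A' \<union> (A - A')" using A' by auto
      have e1: "Res (A - A') B = Res (A - A') B' * Res (A - A') (B - B')"
        by (subst uB, rule Res_union2) (use B' assms in auto)
      have e2: "Res A (B - B') = Res A' (B - B') * Res (A - A') (B - B')"
        by (subst uA, rule Res_union1) (use A' assms in auto)
      show ?thesis by (simp add: e1 e2 divide_inverse ac_simps)
    qed
    have "Res (A - A') B / Res (A - A') A' =
        (Res (A - A') B / Res (A - A') A') * (\<Sum>B'\<in>BB. Res A' (B - B') / Res B' (B - B'))"
      using L1[OF that] by simp
    also have "\<dots> = (\<Sum>B'\<in>BB. (Res (A - A') B / Res (A - A') A') * (Res A' (B - B') / Res B' (B - B')))"
      by (rule sum_distrib_left)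
    also have "\<dots> = (\<Sum>B'\<in>BB. (Res A (B - B') / Res B' (B - B')) * (Res (A - A') B' / Res (A - A') A'))"
      by (rule sum.cong[OF refl]) (rule key)
    finally show ?thesis .
  qed
  have "(\<Sum>A'\<in>{A'. A' \<subseteq> A \<and> card A' = p}.
            mconst (Res (A - A') B / Res (A - A') A')
            * Res (mvar ` {..<m - p}) (mconst ` A'))
      = (\<Sum>A'\<in>AA. mconst (Res (A - A') B / Res (A - A') A') * RH mconst X A')"
    unfolding AA_def X_def k_def ResX ..
  also have "\<dots> = (\<Sum>A'\<in>AA. \<Sum>B'\<in>BB. mconst (Res A (B - B') / Res B' (B - B')) *
        (mconst (Res (A - A') B' / Res (A - A') A') * RH mconst X A'))"
  proof (rule sum.cong[OF refl])
    fix A' assume a: "A' \<in> AA"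
    show "mconst (Res (A - A') B / Res (A - A') A') * RH mconst X A' =
      (\<Sum>B'\<in>BB. mconst (Res A (B - B') / Res B' (B - B')) *
        (mconst (Res (A - A') B' / Res (A - A') A') * RH mconst X A'))"
      unfolding split[OF a] fm.h_sum fm.h_mult sum_distrib_right by (simp only: mult.assoc)
  qed
  also have "\<dots> = (\<Sum>B'\<in>BB. \<Sum>A'\<in>AA. mconst (Res A (B - B') / Res B' (B - B')) *
        (mconst (Res (A - A') B' / Res (A - A') A') * RH mconst X A'))"
    by (rule sum.swap)
  also have "\<dots> = (\<Sum>B'\<in>BB. mconst (Res A (B - B') / Res B' (B - B')) *
        (\<Sum>A'\<in>AA. mconst (Res (A - A') B' / Res (A - A') A') * RH mconst X A'))"
    by (simp add: sum_distrib_left)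
  also have "\<dots> = (\<Sum>B'\<in>BB. mconst (Res A (B - B') / Res B' (B - B')) * RH mconst X B')"
    by (rule sum.cong[OF refl]) (simp add: L2)
  also have "\<dots> = (\<Sum>B'\<in>{B'. B' \<subseteq> B \<and> card B' = p}.
            mconst (Res A (B - B') / Res B' (B - B'))
            * Res (mvar ` {..<m - p}) (mconst ` B'))"
    unfolding BB_def X_def k_def ResX ..
  finally show ?thesis .
qed

end
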